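(* For every instance of problem MR and every optimal schedule, the speed $s_{i,j}$ of every task $T_{i,j}$ with $v_{i,j}>0$ satisfies $$\frac{v_{i,j}}{t_{\max}}\le s_{i,j}\le\left(\frac{E}{v_{i,j}}\right)^{\frac{1}{\beta-1}},\qquad t_{\max}=\frac{w_{\max}}{w_{\min}}\left(n\,r_{\max}+n(n+1)\left(\frac{|\mathcal T|\cdot v_{\max}^{\beta}}{E}\right)^{\frac{1}{\beta-1}}\right).$$
   Context: Problem MR. There are jobs $\mathcal J=\{1,\dots,n\}$ and processors $\mathcal P=\{1,\dots,m\}$. Job $j$ has weight $w_j>0$, release date $r_j\ge0$, and a nonempty set of Map tasks and a nonempty set of Reduce tasks, preassigned to processors with at most one task of each job per processor; $T_{i,j}$ is the task of job $j$ on processor $i$, with work $v_{i,j}\ge0$; $\mathcal T$ is the set of all tasks and $|\mathcal T|$ its cardinality. A schedule gives each task a start time and a constant speed $s_{i,j}>0$; the task runs non-preemptively for $v_{i,j}/s_{i,j}$ time units and uses energy $v_{i,j}s_{i,j}^{\beta-1}$, where $\beta>1$ is a fixed constant. Feasibility: each processor runs at most one task at a time; tasks of job $j$ start no earlier than $r_j$; Reduce tasks of job $j$ start only after all Map tasks of job $j$ complete; total energy at most a given budget $E>0$. $C_j$ is the maximum completion time of the tasks of job $j$; the objective is to minimize $\sum_j w_jC_j$. $w_{\min}=\min_j w_j$, $w_{\max}=\max_j w_j$, $r_{\max}=\max_j r_j$, $v_{\max}=\max_{i,j}v_{i,j}$. *)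

theory Defs
  imports Complex_Main
begin

text \<open>A task is identified by a pair (i,j) = (processor, job); MT is the set of Map tasks,
  RT the set of Reduce tasks. w, r are job weights and release dates, v the works,
  beta the energy exponent, E the energy budget.\<close>

definition mr_instance ::
  "nat \<Rightarrow> nat \<Rightarrow> (nat \<Rightarrow> real) \<Rightarrow> (nat \<Rightarrow> real) \<Rightarrow> (nat \<times> nat) set \<Rightarrow> (nat \<times> nat) set
   \<Rightarrow> (nat \<Rightarrow> nat \<Rightarrow> real) \<Rightarrow> real \<Rightarrow> real \<Rightarrow> bool" where
  "mr_instance n m w r MT RT v \<beta> E \<longleftrightarrow>
     MT \<subseteq> {1..m} \<times> {1..n} \<and> RT \<subseteq> {1..m} \<times> {1..n} \<and> MT \<inter> RT = {} \<and>
     (\<forall>j\<in>{1..n}. w j > 0 \<and> r j \<ge> 0 \<and>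
        (\<exists>i. (i, j) \<in> MT) \<and> (\<exists>i. (i, j) \<in> RT)) \<and>
     (\<forall>(i, j)\<in>MT \<union> RT. v i j \<ge> 0) \<and> \<beta> > 1 \<and> E > 0"

definition compl :: "(nat \<Rightarrow> nat \<Rightarrow> real) \<Rightarrow> (nat \<Rightarrow> nat \<Rightarrow> real) \<Rightarrow> (nat \<Rightarrow> nat \<Rightarrow> real)
   \<Rightarrow> nat \<Rightarrow> nat \<Rightarrow> real" where
  "compl v st s i j = st i j + v i j / s i j"

definition energy :: "real \<Rightarrow> (nat \<times> nat) set \<Rightarrow> (nat \<Rightarrow> nat \<Rightarrow> real) \<Rightarrow> (nat \<Rightarrow> nat \<Rightarrow> real) \<Rightarrow> real" where
  "energy \<beta> T v s = (\<Sum>(i, j)\<in>T. v i j * s i j powr (\<beta> - 1))"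

definition feasible ::
  "nat \<Rightarrow> nat \<Rightarrow> (nat \<Rightarrow> real) \<Rightarrow> (nat \<times> nat) set \<Rightarrow> (nat \<times> nat) set
   \<Rightarrow> (nat \<Rightarrow> nat \<Rightarrow> real) \<Rightarrow> real \<Rightarrow> real
   \<Rightarrow> (nat \<Rightarrow> nat \<Rightarrow> real) \<Rightarrow> (nat \<Rightarrow> nat \<Rightarrow> real) \<Rightarrow> bool" where
  "feasible n m r MT RT v \<beta> E st s \<longleftrightarrow>
     (\<forall>(i, j)\<in>MT \<union> RT. s i j > 0) \<and>
     (\<forall>(i, j)\<in>MT \<union> RT. st i j \<ge> r j) \<and>
     (\<forall>(i, j)\<in>MT \<union> RT. \<forall>(i', j')\<in>MT \<union> RT. i = i' \<and> j \<noteq> j' \<longrightarrow>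
         compl v st s i j \<le> st i' j' \<or> compl v st s i' j' \<le> st i j) \<and>
     (\<forall>(i, j)\<in>RT. \<forall>(i', j')\<in>MT. j' = j \<longrightarrow> compl v st s i' j' \<le> st i j) \<and>
     energy \<beta> (MT \<union> RT) v s \<le> E"

definition job_completion ::
  "(nat \<times> nat) set \<Rightarrow> (nat \<times> nat) set \<Rightarrow> (nat \<Rightarrow> nat \<Rightarrow> real)
   \<Rightarrow> (nat \<Rightarrow> nat \<Rightarrow> real) \<Rightarrow> (nat \<Rightarrow> nat \<Rightarrow> real) \<Rightarrow> nat \<Rightarrow> real" where
  "job_completion MT RT v st s j =
     Max ((\<lambda>(i, j'). compl v st s i j') ` {t \<in> MT \<union> RT. snd t = j})"

definition objective ::
  "nat \<Rightarrow> (nat \<Rightarrow> real) \<Rightarrow> (nat \<times> nat) set \<Rightarrow> (nat \<times> nat) set \<Rightarrow> (nat \<Rightarrow> nat \<Rightarrow> real)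
   \<Rightarrow> (nat \<Rightarrow> nat \<Rightarrow> real) \<Rightarrow> (nat \<Rightarrow> nat \<Rightarrow> real) \<Rightarrow> real" where
  "objective n w MT RT v st s = (\<Sum>j\<in>{1..n}. w j * job_completion MT RT v st s j)"

definition optimal ::
  "nat \<Rightarrow> nat \<Rightarrow> (nat \<Rightarrow> real) \<Rightarrow> (nat \<Rightarrow> real) \<Rightarrow> (nat \<times> nat) set \<Rightarrow> (nat \<times> nat) set
   \<Rightarrow> (nat \<Rightarrow> nat \<Rightarrow> real) \<Rightarrow> real \<Rightarrow> real
   \<Rightarrow> (nat \<Rightarrow> nat \<Rightarrow> real) \<Rightarrow> (nat \<Rightarrow> nat \<Rightarrow> real) \<Rightarrow> bool" where
  "optimal n m w r MT RT v \<beta> E st s \<longleftrightarrow>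
     feasible n m r MT RT v \<beta> E st s \<and>
     (\<forall>st' s'. feasible n m r MT RT v \<beta> E st' s' \<longrightarrow>
        objective n w MT RT v st s \<le> objective n w MT RT v st' s')"

definition t_max ::
  "nat \<Rightarrow> (nat \<Rightarrow> real) \<Rightarrow> (nat \<Rightarrow> real) \<Rightarrow> (nat \<times> nat) set \<Rightarrow> (nat \<times> nat) set
   \<Rightarrow> (nat \<Rightarrow> nat \<Rightarrow> real) \<Rightarrow> real \<Rightarrow> real \<Rightarrow> real" where
  "t_max n w r MT RT v \<beta> E =
     (let wmin = Min (w ` {1..n}); wmax = Max (w ` {1..n}); rmax = Max (r ` {1..n});
          T = MT \<union> RT; vmax = Max ((\<lambda>(i, j). v i j) ` T)
      in wmax / wmin * (real n * rmax + real n * (real n + 1) *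
           (real (card T) * vmax powr \<beta> / E) powr (1 / (\<beta> - 1))))"

end

theory Submission
  imports Defs
begin

lemma sum_two_j: "(\<Sum>j\<in>{1..n}. 2 * real j) = real n * (real n + 1)"
  by (induction n) (auto simp: algebra_simps)

theorem proposition2:
  fixes n m :: nat and w r :: "nat \<Rightarrow> real" and MT RT :: "(nat \<times> nat) set"
    and v st s :: "nat \<Rightarrow> nat \<Rightarrow> real" and \<beta> E :: real
  assumes "mr_instance n m w r MT RT v \<beta> E"
    and "optimal n m w r MT RT v \<beta> E st s"
    and "(i, j) \<in> MT \<union> RT" and "v i j > 0"
  shows "v i j / t_max n w r MT RT v \<beta> E \<le> s i j \<and>
         s i j \<le> (E / v i j) powr (1 / (\<beta> - 1))"
proof -
  define T where "T = MT \<union> RT"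
  note inst = assms(1)[unfolded mr_instance_def]
  have MTs: "MT \<subseteq> {1..m} \<times> {1..n}" and RTs: "RT \<subseteq> {1..m} \<times> {1..n}"
    and disj: "MT \<inter> RT = {}" and jobs: "\<And>k. k\<in>{1..n} \<Longrightarrow> w k > 0 \<and> r k \<ge> 0 \<and>
        (\<exists>i. (i, k) \<in> MT) \<and> (\<exists>i. (i, k) \<in> RT)"
    and vnn: "\<And>a b. (a,b)\<in>T \<Longrightarrow> v a b \<ge> 0" and b1: "\<beta> > 1" and E0: "E > 0"
    using inst unfolding T_def by auto
  have Ts: "T \<subseteq> {1..m} \<times> {1..n}" using MTs RTs T_def by auto
  have finT: "finite T" using Ts finite_subset by blast
  have ijT: "(i,j) \<in> T" using assms(3) T_def by simp
  have jn: "j \<in> {1..n}" using ijT Ts by auto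
  have feas: "feasible n m r MT RT v \<beta> E st s" using assms(2) optimal_def by blast
  note F = feas[unfolded feasible_def, folded T_def]
  have spos: "\<And>a b. (a,b)\<in>T \<Longrightarrow> s a b > 0" using F by auto
  have stge: "\<And>a b. (a,b)\<in>T \<Longrightarrow> st a b \<ge> r b" using F by auto
  have en: "energy \<beta> T v s \<le> E" using F by auto
  have sij: "s i j > 0" using spos ijT by blast
  have upper: "s i j \<le> (E / v i j) powr (1 / (\<beta> - 1))"
  proof -
    have "v i j * s i j powr (\<beta> - 1) \<le> (\<Sum>(a, b)\<in>T. v a b * s a b powr (\<beta> - 1))"
      using member_le_sum[of "(i,j)" T "\<lambda>(a,b). v a b * s a b powr (\<beta> - 1)"] ijT finT vnn
      by (auto simp: split_beta)
    then have "v i j * s i j powr (\<beta> - 1) \<le> E" using en energy_def by simp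
    then have h: "s i j powr (\<beta> - 1) \<le> E / v i j" using assms(4)
      by (simp add: field_simps)
    have "s i j = (s i j powr (\<beta> - 1)) powr (1 / (\<beta> - 1))"
      using sij b1 by (simp add: powr_powr)
    also have "\<dots> \<le> (E / v i j) powr (1 / (\<beta> - 1))"
      using h b1 by (intro powr_mono2) auto
    finally show ?thesis .
  qed
  \<comment> \<open>lower bound: a concrete schedule\<close>
  define wmin where "wmin = Min (w ` {1..n})"
  define wmax where "wmax = Max (w ` {1..n})"
  define rmax where "rmax = Max (r ` {1..n})"
  define vmax where "vmax = Max ((\<lambda>(i, j). v i j) ` T)"
  define X where "X = (real (card T) * vmax powr \<beta> / E) powr (1 / (\<beta> - 1))"
  have tm: "t_max n w r MT RT v \<beta> E = wmax / wmin * (real n * rmax + real n * (real n + 1) * X)"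
    unfolding t_max_def wmin_def wmax_def rmax_def vmax_def X_def T_def Let_def by simp
  have n1: "n \<ge> 1" using jn by auto
  have nne: "{1..n} \<noteq> {}" using n1 by auto
  have wmin_le: "\<And>k. k \<in> {1..n} \<Longrightarrow> wmin \<le> w k" unfolding wmin_def by auto
  have wmax_ge: "\<And>k. k \<in> {1..n} \<Longrightarrow> w k \<le> wmax" unfolding wmax_def by auto
  have rmax_ge: "\<And>k. k \<in> {1..n} \<Longrightarrow> r k \<le> rmax" unfolding rmax_def by auto
  have vmax_ge: "\<And>a b. (a,b) \<in> T \<Longrightarrow> v a b \<le> vmax" unfolding vmax_def using finT
    by (auto intro!: Max_ge)
  have wmin0: "wmin > 0" unfolding wmin_def using jobs nne by (subst Min_gr_iff) auto
  have wmax0: "wmax > 0" using wmax_ge jobs jn by fastforce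
  have rmax0: "rmax \<ge> 0" using rmax_ge jobs jn by fastforce
  have vmax0: "vmax > 0" using vmax_ge[OF ijT] assms(4) by simp
  have cT: "card T > 0" using finT ijT card_gt_0_iff by blast
  have X0: "X > 0" unfolding X_def using cT vmax0 E0 by simp
  define \<sigma> where "\<sigma> = vmax / X"
  have sig0: "\<sigma> > 0" unfolding \<sigma>_def using vmax0 X0 by simp
  have Xpow: "X powr (\<beta> - 1) = real (card T) * vmax powr \<beta> / E"
    unfolding X_def using b1 cT vmax0 E0 by (simp add: powr_powr)
  have sigpow: "\<sigma> powr (\<beta> - 1) = E / (real (card T) * vmax)"
  proof -
    have "\<sigma> powr (\<beta> - 1) = vmax powr (\<beta> - 1) / X powr (\<beta> - 1)"
      unfolding \<sigma>_def using vmax0 X0 by (simp add: powr_divide)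
    also have "vmax powr (\<beta> - 1) = vmax powr \<beta> / vmax"
      using vmax0 by (simp add: powr_diff)
    finally show ?thesis using Xpow vmax0 cT E0 by (simp add: field_simps)
  qed
  have dur: "\<And>a b. (a,b) \<in> T \<Longrightarrow> v a b / \<sigma> \<le> X"
  proof -
    fix a b assume ab: "(a,b) \<in> T"
    have "v a b / \<sigma> = v a b * X / vmax" unfolding \<sigma>_def by simp
    also have "\<dots> \<le> vmax * X / vmax"
      using vmax_ge[OF ab] X0 vmax0 by (intro divide_right_mono mult_right_mono) auto
    finally show "v a b / \<sigma> \<le> X" using vmax0 by simp
  qed
  define c where "c = (\<lambda>a b. if (a,b) \<in> MT then 2 * real b - 2 else 2 * real b - 1)"
  define st' where "st' = (\<lambda>a b. rmax + X * c a b)"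
  define s' where "s' = (\<lambda>(a::nat) (b::nat). \<sigma>)"
  have cge: "\<And>a b. (a,b) \<in> T \<Longrightarrow> c a b \<ge> 0" unfolding c_def using Ts by force
  have cle: "\<And>a b. c a b \<le> 2 * real b - 1" unfolding c_def by auto
  have cge2: "\<And>a b. c a b \<ge> 2 * real b - 2" unfolding c_def by auto
  have compl': "\<And>a b. (a,b) \<in> T \<Longrightarrow> compl v st' s' a b \<le> rmax + X * (c a b + 1)"
    unfolding compl_def st'_def s'_def using dur by (simp add: algebra_simps)
  have feas': "feasible n m r MT RT v \<beta> E st' s'"
    unfolding feasible_def
  proof (fold T_def, intro conjI)
    show "\<forall>(a, b)\<in>T. 0 < s' a b" using sig0 s'_def by auto
    show "\<forall>(a, b)\<in>T. r b \<le> st' a b"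
    proof (clarify)
      fix a b assume ab: "(a,b) \<in> T"
      have "b \<in> {1..n}" using ab Ts by auto
      then have "r b \<le> rmax" by (rule rmax_ge)
      moreover have "0 \<le> X * c a b" using X0 cge[OF ab] by simp
      ultimately show "r b \<le> st' a b" unfolding st'_def by simp
    qed
    show "\<forall>(a, b)\<in>T. \<forall>(a', b')\<in>T. a = a' \<and> b \<noteq> b' \<longrightarrow>
         compl v st' s' a b \<le> st' a' b' \<or> compl v st' s' a' b' \<le> st' a b"
    proof -
     { fix a b b' assume ab: "(a,b) \<in> T" and ab': "(a,b') \<in> T" and ne: "b \<noteq> b'"
      have key: "compl v st' s' x y \<le> st' x' y'" if xy: "(x,y) \<in> T" and lt: "y < y'" for x y x' y'
      proof -
        have "real y + 1 \<le> real y'" using lt by simp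
        then have "c x y + 1 \<le> c x' y'" using cle[where a=x and b=y] cge2[where a=x' and b=y'] by simp
        then have "X * (c x y + 1) \<le> X * c x' y'" using X0 by (intro mult_left_mono) auto
        then show ?thesis using compl'[OF xy] unfolding st'_def by simp
      qed
      have "compl v st' s' a b \<le> st' a b' \<or> compl v st' s' a b' \<le> st' a b"
      proof (cases "b < b'")
        case True then show ?thesis using key[OF ab] by blast
      next
        case False then have "b' < b" using ne by simp
        then show ?thesis using key[OF ab'] by blast
      qed }
     then show ?thesis by fast
    qed
    show "\<forall>(a, b)\<in>RT. \<forall>(a', b')\<in>MT. b' = b \<longrightarrow> compl v st' s' a' b' \<le> st' a b"
    proof (clarify)
      fix a b a' assume R: "(a,b) \<in> RT" and M: "(a',b) \<in> MT"
      have "(a,b) \<notin> MT" using R disj by blast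
      then have "c a b = 2 * real b - 1" "c a' b = 2 * real b - 2" using M c_def by auto
      moreover have "(a',b) \<in> T" using M T_def by simp
      ultimately show "compl v st' s' a' b \<le> st' a b"
        using compl'[of a' b] unfolding st'_def by simp
    qed
    show "energy \<beta> T v s' \<le> E"
    proof -
      have "energy \<beta> T v s' = (\<Sum>(a, b)\<in>T. v a b * \<sigma> powr (\<beta> - 1))"
        unfolding energy_def s'_def by simp
      also have "\<dots> \<le> (\<Sum>(a, b)\<in>T. vmax * \<sigma> powr (\<beta> - 1))"
        using vmax_ge by (intro sum_mono) (auto intro!: mult_right_mono)
      also have "\<dots> = real (card T) * vmax * \<sigma> powr (\<beta> - 1)" by simp
      also have "\<dots> = E" using sigpow cT vmax0 by simp
      finally show ?thesis .
    qed
  qed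
  have C'le: "job_completion MT RT v st' s' k \<le> rmax + X * (2 * real k)" if k: "k \<in> {1..n}" for k
  proof -
    obtain a where a: "(a,k) \<in> MT" using jobs[OF k] by blast
    have ne: "{t \<in> T. snd t = k} \<noteq> {}" using a T_def by force
    have fin: "finite {t \<in> T. snd t = k}" using finT by simp
    have "\<forall>x\<in>{t \<in> T. snd t = k}. (\<lambda>(i, j'). compl v st' s' i j') x \<le> rmax + X * (2 * real k)"
    proof
      fix x assume "x \<in> {t \<in> T. snd t = k}"
      then obtain a b where ab: "(a,b) \<in> T" and bk: "b = k" and x: "x = (a,b)" by (cases x) auto
      have "X * (c a b + 1) \<le> X * (2 * real k)" using cle[where a=a and b=b] bk X0
        by (intro mult_left_mono) auto
      then show "(\<lambda>(i, j'). compl v st' s' i j') x \<le> rmax + X * (2 * real k)"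
        using compl'[OF ab] x by simp
    qed
    then show ?thesis unfolding job_completion_def T_def[symmetric]
      using ne fin by (subst Max_le_iff) auto
  qed
  have obj': "objective n w MT RT v st' s' \<le> wmax * (real n * rmax + real n * (real n + 1) * X)"
  proof -
    have "objective n w MT RT v st' s' \<le> (\<Sum>k\<in>{1..n}. wmax * (rmax + X * (2 * real k)))"
      unfolding objective_def
    proof (rule sum_mono)
      fix k assume k: "k \<in> {1..n}"
      have p: "0 \<le> rmax + X * (2 * real k)" using rmax0 X0 by simp
      have "w k * job_completion MT RT v st' s' k \<le> w k * (rmax + X * (2 * real k))"
        using C'le[OF k] jobs[OF k] by (intro mult_left_mono) auto
      also have "\<dots> \<le> wmax * (rmax + X * (2 * real k))"
        using wmax_ge[OF k] p by (intro mult_right_mono) auto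
      finally show "w k * job_completion MT RT v st' s' k \<le> wmax * (rmax + X * (2 * real k))" .
    qed
    also have "\<dots> = wmax * (real n * rmax + X * (\<Sum>k\<in>{1..n}. 2 * real k))"
      by (simp add: sum_distrib_left[symmetric] sum.distrib distrib_left)
    also have "\<dots> = wmax * (real n * rmax + real n * (real n + 1) * X)"
      using sum_two_j[of n] by (simp add: algebra_simps)
    finally show ?thesis .
  qed
  have Cge: "job_completion MT RT v st s k \<ge> compl v st s a k" if ak: "(a,k) \<in> T" for a k
    unfolding job_completion_def T_def[symmetric]
    using ak finT by (intro Max_ge) force+
  have complge: "compl v st s a k \<ge> v a k / s a k" if ak: "(a,k) \<in> T" "k \<in> {1..n}" for a k
    using stge[OF ak(1)] jobs[OF ak(2)] unfolding compl_def by simp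
  have Cnn: "job_completion MT RT v st s k \<ge> 0" if k: "k \<in> {1..n}" for k
  proof -
    obtain a where a: "(a,k) \<in> MT" using jobs[OF k] by blast
    then have aT: "(a,k) \<in> T" using T_def by simp
    have "v a k / s a k \<ge> 0" using vnn[OF aT] spos[OF aT] by simp
    then show ?thesis using Cge[OF aT] complge[OF aT k] by linarith
  qed
  have "w j * job_completion MT RT v st s j \<le> objective n w MT RT v st s"
    unfolding objective_def
    using member_le_sum[of j "{1..n}" "\<lambda>k. w k * job_completion MT RT v st s k"] jn Cnn jobs
    by (simp add: less_imp_le)
  also have "\<dots> \<le> objective n w MT RT v st' s'" using assms(2) feas' optimal_def by blast
  finally have A: "w j * job_completion MT RT v st s j \<le> wmax * (real n * rmax + real n * (real n + 1) * X)"
    using obj' by linarith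
  have d0: "v i j / s i j > 0" using assms(4) sij by simp
  have "wmin * (v i j / s i j) \<le> w j * job_completion MT RT v st s j"
  proof -
    have "v i j / s i j \<le> job_completion MT RT v st s j" using Cge[OF ijT] complge[OF ijT jn] by linarith
    then show ?thesis using wmin_le[OF jn] d0 wmin0 by (intro mult_mono) auto
  qed
  with A have "wmin * (v i j / s i j) \<le> wmax * (real n * rmax + real n * (real n + 1) * X)" by linarith
  then have B: "v i j / s i j \<le> t_max n w r MT RT v \<beta> E"
    unfolding tm using wmin0 by (simp add: field_simps)
  then have tpos: "t_max n w r MT RT v \<beta> E > 0" using d0 by linarith
  have "v i j / t_max n w r MT RT v \<beta> E \<le> s i j"
    using B tpos sij by (simp add: field_simps)
  with upper show ?thesis by blast
qed

end
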